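(* Let $M\ge3$, $N\ge3$ and let $\phi\in\{0,1\}^{E(\mathbb{L}_1)}$ be a primal contour configuration. Assume that $\partial B^*_{M,N}$ crosses present edges of $\mathbb{L}_1$ an even number of times. Then one can change the states of the edges of $B_{M-1,N-1}$ (leaving all other edges unchanged) in such a way that in the resulting configuration all present edges of $\mathbb{L}_1$ crossing $\partial B^*_{M,N}$ belong to the same contour, and each vertex of $B_{M-1,N-1}$ has an even number of incident present edges.
   Context: Let $\mathbb{L}_1$ be the graph with vertices $(m-\tfrac12,n+\tfrac12)$, $m,n$ both even, and $\mathbb{L}_2$ the graph with vertices $(m-\tfrac12,n+\tfrac12)$, $m,n$ both odd; in each, two vertices are joined by an edge iff at Euclidean distance $2$; faces of each are squares of side $2$. A primal contour configuration is $\phi\in\{0,1\}^{E(\mathbb{L}_1)}$ in which every vertex of $\mathbb{L}_1$ has an even number of incident present edges (edges with value $1$); a contour is a connected component of the set of present edges. Boxes of $\mathbb{L}_2$: $B^*_{1,1}$ is the face of $\mathbb{L}_2$ containing the origin; for $n$ odd (resp. even), $B^*_{m,n+1}$ is obtained from $B^*_{m,n}$ by adding a column of $m$ faces of $\mathbb{L}_2$ to its right (resp. left); for $m$ odd (resp. even), $B^*_{m+1,n}$ is obtained from $B^*_{m,n}$ by adding a row of $n$ faces of $\mathbb{L}_2$ at its bottom (resp. top). Thus $B^*_{M,N}$ is a rectangle of $M$ rows and $N$ columns of faces of $\mathbb{L}_2$, with boundary $\partial B^*_{M,N}$. $B_{M-1,N-1}$ denotes the subgraph of $\mathbb{L}_1$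 enclosed by $\partial B^*_{M,N}$ (the vertices of $\mathbb{L}_1$ in the interior of the rectangle and the edges of $\mathbb{L}_1$ joining two of them). An edge of $\mathbb{L}_1$ crosses $\partial B^*_{M,N}$ if it joins a vertex inside to a vertex outside the rectangle. *)

theory Defs
  imports Main
begin

text \<open>A vertex of L1 or L2 at the point (m - 1/2, n + 1/2) is encoded by the
integer pair (m, n).  L1: m, n both even.  L2: m, n both odd.\<close>

definition L1_vertex :: "int \<times> int \<Rightarrow> bool" where
  "L1_vertex v \<longleftrightarrow> even (fst v) \<and> even (snd v)"

definition L2_vertex :: "int \<times> int \<Rightarrow> bool" where
  "L2_vertex v \<longleftrightarrow> odd (fst v) \<and> odd (snd v)"

text \<open>Edges of L1: unordered pairs of L1 vertices at Euclidean distance 2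
(squared distance 4; the shift by (-1/2, 1/2) does not affect distances).\<close>

definition L1_edge :: "(int \<times> int) set \<Rightarrow> bool" where
  "L1_edge e \<longleftrightarrow> (\<exists>u v. e = {u, v} \<and> L1_vertex u \<and> L1_vertex v \<and>
      (fst u - fst v)^2 + (snd u - snd v)^2 = 4)"

text \<open>A configuration phi in {0,1}^E(L1) is represented by its set P of present
edges (the edges with value 1).  Degree of a vertex in P:\<close>

definition deg :: "(int \<times> int) set set \<Rightarrow> int \<times> int \<Rightarrow> nat" where
  "deg P v = card {e \<in> P. v \<in> e}"

definition primal_contour_config :: "(int \<times> int) set set \<Rightarrow> bool" where
  "primal_contour_config P \<longleftrightarrow>
     (\<forall>e\<in>P. L1_edge e) \<and> (\<forall>v. L1_vertex v \<longrightarrow> even (deg P v))"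

text \<open>Two present edges lie in the same contour (connected component of the
set of present edges) iff they are linked by a chain of present edges in which
consecutive edges share a vertex.\<close>

definition same_contour :: "(int \<times> int) set set \<Rightarrow> (int \<times> int) set \<Rightarrow> (int \<times> int) set \<Rightarrow> bool" where
  "same_contour P e f \<longleftrightarrow> e \<in> P \<and> f \<in> P \<and>
     (e, f) \<in> {(a, b). a \<in> P \<and> b \<in> P \<and> a \<inter> b \<noteq> {}}\<^sup>*"

text \<open>A face of L2 is encoded by its lower-left corner (p, q), an L2 vertex; it is
the square [p-1/2, p+3/2] x [q+1/2, q+5/2].  The face containing the origin is
the one with corner (-1, -1).\<close>

definition add_right :: "(int \<times> int) set \<Rightarrow> (int \<times> int) set" where
  "add_right B = B \<union> {(p + 2, q) | p q. (p, q) \<in> B \<and> p = Max (fst ` B)}"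

definition add_left :: "(int \<times> int) set \<Rightarrow> (int \<times> int) set" where
  "add_left B = B \<union> {(p - 2, q) | p q. (p, q) \<in> B \<and> p = Min (fst ` B)}"

definition add_top :: "(int \<times> int) set \<Rightarrow> (int \<times> int) set" where
  "add_top B = B \<union> {(p, q + 2) | p q. (p, q) \<in> B \<and> q = Max (snd ` B)}"

definition add_bottom :: "(int \<times> int) set \<Rightarrow> (int \<times> int) set" where
  "add_bottom B = B \<union> {(p, q - 2) | p q. (p, q) \<in> B \<and> q = Min (snd ` B)}"

text \<open>box M N is the set of faces of B*_{M,N} (M rows, N columns):
B*_{1,1} is the face containing the origin; B*_{m+1,n} adds a row at the bottom
(m odd) or top (m even); B*_{m,n+1} adds a column to the right (n odd) or left
(n even).  (The paper's two growth rules commute; here we first grow rows in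
the first column, then columns.)\<close>

fun box :: "nat \<Rightarrow> nat \<Rightarrow> (int \<times> int) set" where
  "box 0 n = {}"
| "box (Suc m) 0 = {}"
| "box (Suc 0) (Suc 0) = {(-1, -1)}"
| "box (Suc (Suc m)) (Suc 0) =
     (if odd (Suc m) then add_bottom (box (Suc m) (Suc 0)) else add_top (box (Suc m) (Suc 0)))"
| "box (Suc m) (Suc (Suc n)) =
     (if odd (Suc n) then add_right (box (Suc m) (Suc n)) else add_left (box (Suc m) (Suc n)))"

text \<open>An L1 vertex (m,n), i.e. the point (m-1/2, n+1/2), lies in the interior of
the rectangle B*_{M,N} iff it lies in the interior of one of its faces (L1
vertices never lie on lines of L2): p-1/2 < m-1/2 < p+3/2, q+1/2 < n+1/2 < q+5/2.\<close>

definition inside_box :: "nat \<Rightarrow> nat \<Rightarrow> int \<times> int \<Rightarrow> bool" where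
  "inside_box M N v \<longleftrightarrow> L1_vertex v \<and>
     (\<exists>(p, q) \<in> box M N. p < fst v \<and> fst v < p + 2 \<and> q < snd v \<and> snd v < q + 2)"

text \<open>Edges of B_{M-1,N-1}: L1 edges joining two vertices inside the rectangle.\<close>

definition box_edge :: "nat \<Rightarrow> nat \<Rightarrow> (int \<times> int) set \<Rightarrow> bool" where
  "box_edge M N e \<longleftrightarrow> L1_edge e \<and> (\<forall>v\<in>e. inside_box M N v)"

definition crossing_edge :: "nat \<Rightarrow> nat \<Rightarrow> (int \<times> int) set \<Rightarrow> bool" where
  "crossing_edge M N e \<longleftrightarrow> L1_edge e \<and>
     (\<exists>u\<in>e. inside_box M N u) \<and> (\<exists>v\<in>e. \<not> inside_box M N v)"

end

theory Submission
  imports Defs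
begin

type_synonym ef = "int \<Rightarrow> int \<Rightarrow> bool"

definition valid :: "int \<Rightarrow> int \<Rightarrow> ef \<Rightarrow> ef \<Rightarrow> bool" where
  "valid n m hr vr \<longleftrightarrow> (\<forall>i j. hr i j \<longrightarrow> 0 \<le> i \<and> i+1 < n \<and> 0 \<le> j \<and> j < m) \<and>
     (\<forall>i j. vr i j \<longrightarrow> 0 \<le> i \<and> i < n \<and> 0 \<le> j \<and> j+1 < m)"

definition dg :: "ef \<Rightarrow> ef \<Rightarrow> int \<Rightarrow> int \<Rightarrow> nat" where
  "dg hr vr i j = of_bool (hr i j) + of_bool (hr (i-1) j) + of_bool (vr i j) + of_bool (vr i (j-1))"

definition stp :: "ef \<Rightarrow> ef \<Rightarrow> ((int\<times>int)\<times>(int\<times>int)) set" where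
  "stp hr vr = {(x,y). (fst y = fst x + 1 \<and> snd y = snd x \<and> hr (fst x) (snd x))
      \<or> (fst y = fst x - 1 \<and> snd y = snd x \<and> hr (fst y) (snd x))
      \<or> (fst y = fst x \<and> snd y = snd x + 1 \<and> vr (fst x) (snd x))
      \<or> (fst y = fst x \<and> snd y = snd x - 1 \<and> vr (fst x) (snd y))}"

definition inV :: "int \<Rightarrow> int \<Rightarrow> int\<times>int \<Rightarrow> bool" where
  "inV n m x \<longleftrightarrow> 0 \<le> fst x \<and> fst x < n \<and> 0 \<le> snd x \<and> snd x < m"

definition bd :: "int \<Rightarrow> int \<Rightarrow> int\<times>int \<Rightarrow> bool" where
  "bd n m x \<longleftrightarrow> inV n m x \<and> (fst x = 0 \<or> fst x = n-1 \<or> snd x = 0 \<or> snd x = m-1)"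

definition cr :: "int \<Rightarrow> int \<Rightarrow> int\<times>int \<Rightarrow> bool" where
  "cr n m x \<longleftrightarrow> inV n m x \<and> (fst x = 0 \<or> fst x = n-1) \<and> (snd x = 0 \<or> snd x = m-1)"

definition GRID :: "int \<Rightarrow> int \<Rightarrow> bool" where
  "GRID n m \<longleftrightarrow> (\<forall>T S. T \<subseteq> Collect (bd n m) \<longrightarrow> even (card T) \<longrightarrow> S \<subseteq> T \<union> Collect (cr n m) \<longrightarrow>
     (\<exists>hr vr. valid n m hr vr \<and> (\<forall>x. inV n m x \<longrightarrow> (odd (dg hr vr (fst x) (snd x)) \<longleftrightarrow> x \<in> T))
        \<and> (\<forall>x\<in>S. \<forall>y\<in>S. (x,y) \<in> (stp hr vr)\<^sup>*)))"

lemma stp_sym: "(x,y) \<in> stp hr vr \<Longrightarrow> (y,x) \<in> stp hr vr"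
  unfolding stp_def by auto

lemma reach_sym: "(x,y) \<in> (stp hr vr)\<^sup>* \<Longrightarrow> (y,x) \<in> (stp hr vr)\<^sup>*"
proof (induction rule: rtrancl_induct)
  case base then show ?case by simp
next
  case (step y z)
  then show ?case by (meson converse_rtrancl_into_rtrancl stp_sym)
qed

lemma reach_mono:
  assumes "(x,y) \<in> (stp hr vr)\<^sup>*" "\<And>i j. hr i j \<Longrightarrow> hr' i j" "\<And>i j. vr i j \<Longrightarrow> vr' i j"
  shows "(x,y) \<in> (stp hr' vr')\<^sup>*"
proof -
  have "stp hr vr \<subseteq> stp hr' vr'" using assms(2,3) unfolding stp_def by auto
  then show ?thesis using assms(1) rtrancl_mono by blast
qed

lemma stp_h: "hr i j \<Longrightarrow> ((i,j),(i+1,j)) \<in> (stp hr vr)\<^sup>*"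
  unfolding stp_def by auto
lemma stp_h': "hr (i-1) j \<Longrightarrow> ((i,j),(i-1,j)) \<in> (stp hr vr)\<^sup>*"
  unfolding stp_def by auto
lemma stp_v: "vr i j \<Longrightarrow> ((i,j),(i,j+1)) \<in> (stp hr vr)\<^sup>*"
  unfolding stp_def by auto
lemma stp_v': "vr i (j-1) \<Longrightarrow> ((i,j),(i,j-1)) \<in> (stp hr vr)\<^sup>*"
  unfolding stp_def by auto

lemma card_symdiff_parity:
  assumes "finite A" "finite B"
  shows "even (card ((A - B) \<union> (B - A))) \<longleftrightarrow> even (card A + card B)"
proof -
  have "card ((A - B) \<union> (B - A)) = card (A - B) + card (B - A)"
    by (rule card_Un_disjoint) (use assms in auto)
  moreover have "card A = card (A - B) + card (A \<inter> B)"
    using assms by (metis add.commute card_Int_Diff)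
  moreover have "card B = card (B - A) + card (A \<inter> B)"
    using assms by (metis Int_commute add.commute card_Int_Diff)
  ultimately show ?thesis by presburger
qed

lemma dg_valid_top:
  assumes "valid n m hr vr"
  shows "\<not> vr i (m-1)" "\<not> hr i m" "\<not> vr i m"
  using assms unfolding valid_def by force+

lemma step_rows:
  assumes G: "GRID n (m-1)" and m4: "m \<ge> 4" and n3: "n \<ge> 3"
  shows "GRID n m"
  unfolding GRID_def
proof (intro allI impI)
  fix T S assume Tb: "T \<subseteq> Collect (bd n m)" and Te: "even (card T)"
    and Sc: "S \<subseteq> T \<union> Collect (cr n m)"
  define top where "top = m-1"
  define mid where "mid = m-2"
  define Ttop where "Ttop = {i. (i,top) \<in> T}"
  define drop where "drop \<longleftrightarrow> odd (card Ttop + nat n)"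
  define v where "v i \<longleftrightarrow> 0 \<le> i \<and> i < n \<and> \<not> (i = 1 \<and> drop)" for i
  define R where "R = (Ttop - Collect v) \<union> (Collect v - Ttop)"
  define pre where "pre i \<longleftrightarrow> odd (card {k\<in>R. k \<le> i})" for i
  define T2 where "T2 = {i. (i,mid) \<in> T}"
  define T' where "T' = {x\<in>T. snd x < mid} \<union> (\<lambda>i. (i,mid)) ` ((T2 - Collect v) \<union> (Collect v - T2))"
  define S' where "S' = {x\<in>S. snd x < mid} \<union> T' \<union> {(0,mid),(n-1,mid)}"
  have TinV: "x \<in> T \<Longrightarrow> inV n m x" for x using Tb unfolding bd_def by auto
  have Ttop_sub: "Ttop \<subseteq> {0..<n}" using TinV unfolding Ttop_def inV_def by auto
  have T2_sub: "T2 \<subseteq> {0..<n}" using TinV unfolding T2_def inV_def by auto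
  have v_sub: "Collect v \<subseteq> {0..<n}" unfolding v_def by auto
  have fin: "finite Ttop" "finite T2" "finite (Collect v)"
    using Ttop_sub T2_sub v_sub finite_subset by blast+
  have R_sub: "R \<subseteq> {0..<n}" using Ttop_sub v_sub unfolding R_def by auto
  have finR: "finite R" using R_sub finite_subset by blast
  have vset: "Collect v = {0..<n} - (if drop then {1} else {})"
    unfolding v_def by auto
  have cardv: "card (Collect v) = (if drop then nat n - 1 else nat n)"
    using n3 unfolding vset by (auto simp: card_Diff_singleton)
  have ev_vtop: "even (card (Collect v) + card Ttop)"
    using n3 unfolding cardv drop_def by (cases drop) (auto simp: drop_def)
  have evR: "even (card R)"
    unfolding R_def using card_symdiff_parity[OF fin(1,3)] ev_vtop by (simp add: add.commute)
  have pre_step: "pre i \<longleftrightarrow> (pre (i-1) \<noteq> (i \<in> R))" for i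
  proof -
    have "{k\<in>R. k \<le> i} = {k\<in>R. k \<le> i-1} \<union> (if i \<in> R then {i} else {})" by (auto simp: less_le)
    moreover have "finite {k\<in>R. k \<le> i-1}" using finR by auto
    ultimately show ?thesis unfolding pre_def by (auto simp: less_le)
  qed
  have pre_neg: "i < 0 \<Longrightarrow> \<not> pre i" for i
  proof -
    assume "i < 0"
    then have e: "{k\<in>R. k \<le> i} = {}" using R_sub by auto
    show ?thesis unfolding pre_def e by simp
  qed
  have pre_big: "i \<ge> n-1 \<Longrightarrow> \<not> pre i" for i
  proof -
    assume "i \<ge> n-1"
    then have e: "{k\<in>R. k \<le> i} = R" using R_sub by auto
    show ?thesis unfolding pre_def e using evR by simp
  qed
  have mid_top: "mid = top - 1" "top = m - 1" "mid \<ge> 2" unfolding mid_def top_def using m4 by auto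
  have T'b: "T' \<subseteq> Collect (bd n (m-1))"
  proof
    fix x assume "x \<in> T'"
    then consider "x \<in> T" "snd x < mid" | "x \<in> (\<lambda>i. (i,mid)) ` ((T2 - Collect v) \<union> (Collect v - T2))"
      unfolding T'_def by auto
    then show "x \<in> Collect (bd n (m-1))"
    proof cases
      case 1 then show ?thesis using Tb unfolding bd_def inV_def mid_def by auto
    next
      case 2 then show ?thesis using T2_sub v_sub m4 unfolding bd_def inV_def mid_def by auto
    qed
  qed
  have Tsplit: "T = {x\<in>T. snd x < mid} \<union> ((\<lambda>i. (i,mid)) ` T2 \<union> (\<lambda>i. (i,top)) ` Ttop)"
  proof -
    have "x \<in> T \<Longrightarrow> snd x < mid \<or> snd x = mid \<or> snd x = top" for x
      using TinV[of x] unfolding inV_def mid_def top_def by auto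
    then show ?thesis unfolding T2_def Ttop_def by force
  qed
  have finT: "finite T"
  proof (rule finite_subset)
    show "T \<subseteq> {0..<n} \<times> {0..<m}" using TinV by (auto simp: inV_def mem_Times_iff)
  qed auto
  have cardT: "card T = card {x\<in>T. snd x < mid} + (card T2 + card Ttop)"
  proof -
    have "card T = card {x\<in>T. snd x < mid} + card ((\<lambda>i. (i,mid)) ` T2 \<union> (\<lambda>i. (i,top)) ` Ttop)"
      by (subst Tsplit, rule card_Un_disjoint) (use finT fin mid_top in auto)
    also have "card ((\<lambda>i. (i,mid)) ` T2 \<union> (\<lambda>i. (i,top)) ` Ttop) = card T2 + card Ttop"
      by (subst card_Un_disjoint) (use fin mid_top in \<open>auto simp: card_image inj_on_def\<close>)
    finally show ?thesis .
  qed
  have cardT': "card T' = card {x\<in>T. snd x < mid} + card ((T2 - Collect v) \<union> (Collect v - T2))"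
    unfolding T'_def
    by (subst card_Un_disjoint) (use finT fin in \<open>auto simp: card_image inj_on_def\<close>)
  have T'e: "even (card T')"
  proof -
    have e1: "even (card ((T2 - Collect v) \<union> (Collect v - T2))) \<longleftrightarrow> even (card T2 + card (Collect v))"
      by (rule card_symdiff_parity[OF fin(2,3)])
    obtain a b c d e where "card T = a + (b + c)" "card T' = a + d" "even d \<longleftrightarrow> even (b + e)"
      "even (e + c)" "even (card T)"
      using cardT cardT' e1 ev_vtop Te by blast
    then show ?thesis by presburger
  qed
  have S'c: "S' \<subseteq> T' \<union> Collect (cr n (m-1))"
  proof
    fix x assume xS: "x \<in> S'"
    show "x \<in> T' \<union> Collect (cr n (m-1))"
    proof (cases "x \<in> T'")
      case False
      then consider "x \<in> S" "snd x < mid" | "x = (0,mid)" | "x = (n-1,mid)"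
        using xS unfolding S'_def by auto
      then show ?thesis
      proof cases
        case 1
        then have "x \<in> T \<or> cr n m x" using Sc by auto
        then show ?thesis using 1 False unfolding T'_def cr_def inV_def using mid_top by auto
      qed (use n3 mid_top in \<open>auto simp: cr_def inV_def\<close>)
    qed simp
  qed
  obtain hr0 vr0 where v0: "valid n (m-1) hr0 vr0"
    and par0: "\<And>x. inV n (m-1) x \<Longrightarrow> (odd (dg hr0 vr0 (fst x) (snd x)) \<longleftrightarrow> x \<in> T')"
    and re0: "\<And>x y. x \<in> S' \<Longrightarrow> y \<in> S' \<Longrightarrow> (x,y) \<in> (stp hr0 vr0)\<^sup>*"
    using G[unfolded GRID_def, rule_format, OF T'b T'e S'c] by blast
  define hr where "hr i j \<longleftrightarrow> hr0 i j \<or> (j = top \<and> pre i)" for i j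
  define vr where "vr i j \<longleftrightarrow> vr0 i j \<or> (j = mid \<and> v i)" for i j
  have pre_rng: "pre i \<Longrightarrow> 0 \<le> i \<and> i + 1 < n" for i
    using pre_neg[of i] pre_big[of i] by force
  have val: "valid n m hr vr" unfolding valid_def
  proof (rule conjI; intro allI impI)
    fix i j assume h: "hr i j"
    show "0 \<le> i \<and> i+1 < n \<and> 0 \<le> j \<and> j < m"
    proof (cases "hr0 i j")
      case True then show ?thesis using v0 unfolding valid_def by fastforce
    next
      case False then show ?thesis using h pre_rng mid_top m4 unfolding hr_def by auto
    qed
  next
    fix i j assume h: "vr i j"
    show "0 \<le> i \<and> i < n \<and> 0 \<le> j \<and> j+1 < m"
    proof (cases "vr0 i j")
      case True then show ?thesis using v0 unfolding valid_def by fastforce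
    next
      case False then show ?thesis using h mid_top m4 unfolding vr_def v_def by auto
    qed
  qed
  have hr0top: "\<not> hr0 i top" for i using v0 mid_top unfolding valid_def by fastforce
  have vr0mid: "\<not> vr0 i mid" "\<not> vr0 i top" for i using v0 mid_top unfolding valid_def by fastforce+
  have par: "odd (dg hr vr (fst x) (snd x)) \<longleftrightarrow> x \<in> T" if xV: "inV n m x" for x
  proof -
    obtain i j where x: "x = (i,j)" by fastforce
    have "j < mid \<or> j = mid \<or> j = top" using xV mid_top unfolding x inV_def by auto
    then consider "j < mid" | "j = mid" | "j = top" by blast
    then show ?thesis
    proof cases
      case 1
      then have "dg hr vr i j = dg hr0 vr0 i j" unfolding dg_def hr_def vr_def using mid_top by auto
      moreover have "inV n (m-1) x" using xV 1 mid_top unfolding x inV_def by auto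
      ultimately show ?thesis using par0[of x] 1 unfolding x T'_def by auto
    next
      case 2
      have "dg hr vr i j = dg hr0 vr0 i j + of_bool (v i)"
        unfolding dg_def hr_def vr_def using mid_top 2 vr0mid by auto
      moreover have "inV n (m-1) x" using xV 2 mid_top unfolding x inV_def by auto
      moreover have "x \<in> T' \<longleftrightarrow> ((i,mid) \<in> T) \<noteq> v i"
        unfolding T'_def x T2_def using 2 by auto
      ultimately show ?thesis using par0[of x] 2 unfolding x by auto
    next
      case 3
      have "dg hr vr i top = of_bool (pre i) + of_bool (pre (i-1)) + of_bool (v i)"
        unfolding dg_def hr_def vr_def using mid_top 3 vr0mid hr0top by auto
      moreover have "i \<in> R \<longleftrightarrow> (i \<in> Ttop) \<noteq> v i" unfolding R_def by auto
      moreover have "(i \<in> Ttop) \<longleftrightarrow> (i,top) \<in> T" unfolding Ttop_def by simp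
      ultimately show ?thesis using pre_step[of i] unfolding x 3 by auto
    qed
  qed
  have root: "(0,mid) \<in> S'" unfolding S'_def by simp
  have toroot: "(x, (0,mid)) \<in> (stp hr vr)\<^sup>*" if xS: "x \<in> S" for x
  proof -
    have mono: "(a,b) \<in> (stp hr0 vr0)\<^sup>* \<Longrightarrow> (a,b) \<in> (stp hr vr)\<^sup>*" for a b
      by (erule reach_mono) (auto simp: hr_def vr_def)
    have S'r: "y \<in> S' \<Longrightarrow> (y, (0,mid)) \<in> (stp hr vr)\<^sup>*" for y using re0[OF _ root] mono by blast
    obtain i j where x: "x = (i,j)" by fastforce
    have xb: "bd n m x" using xS Sc Tb unfolding cr_def bd_def by auto
    have "j < mid \<or> j = mid \<or> j = top" using xb mid_top unfolding x bd_def inV_def by auto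
    then consider "j < mid" | "j = mid" | "j = top" by blast
    then show ?thesis
    proof cases
      case 1 then show ?thesis using S'r xS unfolding S'_def x by auto
    next
      case 2
      then have "i = 0 \<or> i = n-1" using xb mid_top unfolding x bd_def by auto
      then show ?thesis using S'r 2 unfolding S'_def x by auto
    next
      case 3
      have mid_in: "(k,mid) \<in> S'" if "v k" for k
      proof (cases "k = 0 \<or> k = n-1")
        case True then show ?thesis unfolding S'_def by auto
      next
        case False
        then have "(k,mid) \<notin> T" using Tb mid_top unfolding bd_def by auto
        then have "(k,mid) \<in> T'" using that unfolding T'_def T2_def by auto
        then show ?thesis unfolding S'_def by auto
      qed
      have down: "v k \<Longrightarrow> ((k,top),(k,mid)) \<in> (stp hr vr)\<^sup>*" for k
        using stp_v'[of vr k top hr] mid_top unfolding vr_def by auto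
      show ?thesis
      proof (cases "v i")
        case True
        then show ?thesis using down[OF True] S'r[OF mid_in[OF True]] unfolding x 3 by auto
      next
        case False
        have iV: "0 \<le> i \<and> i < n" using xb unfolding x bd_def inV_def by auto
        then have i1: "i = 1" "drop" using False unfolding v_def by auto
        then have "\<not> cr n m x" using n3 unfolding x cr_def by auto
        then have "x \<in> T" using xS Sc by auto
        then have "odd (dg hr vr i top)" using par[of x] xb unfolding x 3 bd_def by auto
        moreover have "dg hr vr i top = of_bool (pre 1) + of_bool (pre 0)"
          unfolding dg_def hr_def vr_def using i1 vr0mid hr0top mid_top False by auto
        ultimately have "pre 1 \<or> pre 0" by auto
        then show ?thesis
        proof
          assume "pre 1"
          then have "((1,top),(2,top)) \<in> (stp hr vr)\<^sup>*" using stp_h[of hr 1 top vr] unfolding hr_def by auto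
          moreover have "v 2" using n3 i1 unfolding v_def by auto
          ultimately show ?thesis using down[of 2] S'r[OF mid_in[of 2]] unfolding x 3 i1
            by (meson rtrancl_trans)
        next
          assume "pre 0"
          then have "((1,top),(0,top)) \<in> (stp hr vr)\<^sup>*" using stp_h'[of hr 1 top vr] unfolding hr_def by auto
          moreover have "v 0" using n3 i1 unfolding v_def by auto
          ultimately show ?thesis using down[of 0] unfolding x 3 i1
            by (meson rtrancl_trans)
        qed
      qed
    qed
  qed
  show "\<exists>hr vr. valid n m hr vr \<and> (\<forall>x. inV n m x \<longrightarrow> (odd (dg hr vr (fst x) (snd x)) \<longleftrightarrow> x \<in> T))
        \<and> (\<forall>x\<in>S. \<forall>y\<in>S. (x,y) \<in> (stp hr vr)\<^sup>*)"
  proof (intro exI conjI allI impI ballI)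
    show "valid n m hr vr" by (rule val)
  next
    fix x assume "inV n m x" then show "odd (dg hr vr (fst x) (snd x)) \<longleftrightarrow> x \<in> T" by (rule par)
  next
    fix x y assume "x \<in> S" "y \<in> S"
    then show "(x,y) \<in> (stp hr vr)\<^sup>*" using toroot reach_sym by (meson rtrancl_trans)
  qed
qed

definition sw :: "int\<times>int \<Rightarrow> int\<times>int" where "sw x = (snd x, fst x)"

lemma sw_sw[simp]: "sw (sw x) = x" unfolding sw_def by simp
lemma inj_sw: "inj_on sw A" unfolding inj_on_def sw_def by auto

lemma stp_sw:
  assumes "(x,y) \<in> stp hr vr"
  shows "(sw x, sw y) \<in> stp (\<lambda>i j. vr j i) (\<lambda>i j. hr j i)"
  using assms unfolding stp_def sw_def by auto

lemma reach_sw: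
  assumes "(x,y) \<in> (stp hr vr)\<^sup>*"
  shows "(sw x, sw y) \<in> (stp (\<lambda>i j. vr j i) (\<lambda>i j. hr j i))\<^sup>*"
  using assms
proof (induction rule: rtrancl_induct)
  case base then show ?case by simp
next
  case (step y z) then show ?case using stp_sw by (meson rtrancl.rtrancl_into_rtrancl)
qed

lemma bd_sw: "bd n m (sw x) \<longleftrightarrow> bd m n x"
  unfolding bd_def inV_def sw_def by auto
lemma cr_sw: "cr n m (sw x) \<longleftrightarrow> cr m n x"
  unfolding cr_def inV_def sw_def by auto
lemma inV_sw: "inV n m (sw x) \<longleftrightarrow> inV m n x"
  unfolding inV_def sw_def by auto

lemma transpose:
  assumes G: "GRID n m"
  shows "GRID m n"
  unfolding GRID_def
proof (intro allI impI)
  fix T S assume Tb: "T \<subseteq> Collect (bd m n)" and Te: "even (card T)"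
    and Sc: "S \<subseteq> T \<union> Collect (cr m n)"
  have Tb': "sw ` T \<subseteq> Collect (bd n m)" using Tb bd_sw by blast
  have Te': "even (card (sw ` T))" using Te by (simp add: card_image[OF inj_sw])
  have Sc': "sw ` S \<subseteq> sw ` T \<union> Collect (cr n m)" using Sc cr_sw by blast
  obtain hr vr where v0: "valid n m hr vr"
    and par0': "\<forall>x. inV n m x \<longrightarrow> (odd (dg hr vr (fst x) (snd x)) \<longleftrightarrow> x \<in> sw ` T)"
    and re0': "\<forall>x\<in>sw ` S. \<forall>y\<in>sw ` S. (x,y) \<in> (stp hr vr)\<^sup>*"
    using G[unfolded GRID_def, rule_format, OF Tb' Te' Sc'] by (elim exE conjE) (rule that)
  have par0: "\<And>x. inV n m x \<Longrightarrow> (odd (dg hr vr (fst x) (snd x)) \<longleftrightarrow> x \<in> sw ` T)"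
    by (rule par0'[rule_format])
  have re0: "\<And>x y. x \<in> sw ` S \<Longrightarrow> y \<in> sw ` S \<Longrightarrow> (x,y) \<in> (stp hr vr)\<^sup>*"
    by (rule re0'[rule_format])
  show "\<exists>hr vr. valid m n hr vr \<and> (\<forall>x. inV m n x \<longrightarrow> (odd (dg hr vr (fst x) (snd x)) \<longleftrightarrow> x \<in> T))
        \<and> (\<forall>x\<in>S. \<forall>y\<in>S. (x,y) \<in> (stp hr vr)\<^sup>*)"
  proof (intro exI conjI allI impI ballI)
    show "valid m n (\<lambda>i j. vr j i) (\<lambda>i j. hr j i)" using v0 unfolding valid_def by blast
  next
    fix x assume xV: "inV m n x"
    have "dg (\<lambda>i j. vr j i) (\<lambda>i j. hr j i) (fst x) (snd x) = dg hr vr (fst (sw x)) (snd (sw x))"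
      unfolding dg_def sw_def by simp
    moreover have "inV n m (sw x)" using xV unfolding inV_def sw_def by auto
    moreover have "sw x \<in> sw ` T \<longleftrightarrow> x \<in> T" by (rule inj_image_mem_iff[OF inj_sw])
    ultimately show "odd (dg (\<lambda>i j. vr j i) (\<lambda>i j. hr j i) (fst x) (snd x)) \<longleftrightarrow> x \<in> T"
      using par0 by simp
  next
    fix x y assume "x \<in> S" "y \<in> S"
    then have "(sw x, sw y) \<in> (stp hr vr)\<^sup>*" using re0 by blast
    then show "(x, y) \<in> (stp (\<lambda>i j. vr j i) (\<lambda>i j. hr j i))\<^sup>*" using reach_sw[of "sw x" "sw y" hr vr] by simp
  qed
qed


lemma grid_all:
  assumes base: "GRID 3 3"
  shows "n \<ge> 3 \<Longrightarrow> m \<ge> 3 \<Longrightarrow> GRID n m"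
proof -
  have col: "GRID 3 m" if "m \<ge> 3" for m :: int
    using that
  proof (induction m rule: int_ge_induct)
    case base then show ?case using assms by simp
  next
    case (step k) then show ?case using step_rows[of 3 "k+1"] by simp
  qed
  assume n3: "n \<ge> 3" and m3: "m \<ge> 3"
  show "GRID n m" using m3
  proof (induction m rule: int_ge_induct)
    case base then show ?case using transpose[OF col[OF n3]] by simp
  next
    case (step k) then show ?case using step_rows[of n "k+1"] n3 by simp
  qed
qed

definition B8 :: "(int\<times>int) list" where
  "B8 = [(0,0),(1,0),(2,0),(2,1),(2,2),(1,2),(0,2),(0,1)]"
definition C4 :: "(int\<times>int) list" where
  "C4 = [(0,0),(2,0),(0,2),(2,2)]"
definition A9 :: "(int\<times>int) list" where
  "A9 = [(0,0),(1,0),(2,0),(0,1),(1,1),(2,1),(0,2),(1,2),(2,2)]"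

definition hf :: "bool list \<Rightarrow> ef" where
  "hf H i j \<longleftrightarrow> 0 \<le> i \<and> i < 2 \<and> 0 \<le> j \<and> j < 3 \<and> H ! nat (i + 2*j)"
definition vf :: "bool list \<Rightarrow> ef" where
  "vf V i j \<longleftrightarrow> 0 \<le> i \<and> i < 3 \<and> 0 \<le> j \<and> j < 2 \<and> V ! nat (i + 3*j)"

definition nbrs :: "ef \<Rightarrow> ef \<Rightarrow> int\<times>int \<Rightarrow> (int\<times>int) list" where
  "nbrs hr vr x = (if hr (fst x) (snd x) then [(fst x + 1, snd x)] else [])
     @ (if hr (fst x - 1) (snd x) then [(fst x - 1, snd x)] else [])
     @ (if vr (fst x) (snd x) then [(fst x, snd x + 1)] else [])
     @ (if vr (fst x) (snd x - 1) then [(fst x, snd x - 1)] else [])"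

fun bfs :: "ef \<Rightarrow> ef \<Rightarrow> nat \<Rightarrow> (int\<times>int) list \<Rightarrow> (int\<times>int) list" where
  "bfs hr vr 0 L = L"
| "bfs hr vr (Suc k) L = bfs hr vr k (remdups (L @ concat (map (nbrs hr vr) L)))"

lemma nbrs_stp: "y \<in> set (nbrs hr vr x) \<Longrightarrow> (x,y) \<in> stp hr vr"
  by (cases x) (auto simp: nbrs_def stp_def split: if_splits)

lemma bfs_sound:
  "(\<And>y. y \<in> set L \<Longrightarrow> (r,y) \<in> (stp hr vr)\<^sup>*) \<Longrightarrow> x \<in> set (bfs hr vr k L) \<Longrightarrow> (r,x) \<in> (stp hr vr)\<^sup>*"
proof (induction k arbitrary: L)
  case 0 then show ?case by simp
next
  case (Suc k)
  have H: "\<And>y. y \<in> set (remdups (L @ concat (map (nbrs hr vr) L))) \<Longrightarrow> (r,y) \<in> (stp hr vr)\<^sup>*"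
  proof -
    fix y assume "y \<in> set (remdups (L @ concat (map (nbrs hr vr) L)))"
    then have "y \<in> set L \<or> (\<exists>z\<in>set L. y \<in> set (nbrs hr vr z))" by auto
    then show "(r,y) \<in> (stp hr vr)\<^sup>*"
    proof
      assume "y \<in> set L" then show ?thesis using Suc.prems by blast
    next
      assume "\<exists>z\<in>set L. y \<in> set (nbrs hr vr z)"
      then obtain z where "z \<in> set L" "y \<in> set (nbrs hr vr z)" by blast
      then show ?thesis using Suc.prems(1)[of z] nbrs_stp
        by (meson rtrancl.rtrancl_into_rtrancl)
    qed
  qed
  show ?case
    apply (rule Suc.IH[where L = "remdups (L @ concat (map (nbrs hr vr) L))"])
    using H apply blast
    using Suc.prems(2) apply simp
    done
qed

definition wit8 :: "bool \<Rightarrow> bool \<Rightarrow> bool \<Rightarrow> bool \<Rightarrow> bool \<Rightarrow> bool \<Rightarrow> bool \<Rightarrow> bool \<Rightarrow> bool list \<times> bool list" where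
  "wit8 b0 b1 b2 b3 b4 b5 b6 b7 = (if b0 then (if b1 then (if b2 then (if b3 then (if b4 then (if b5 then (if b6 then (if b7 then ([True, True, True, True, True, True], [False, True, False, False, True, False]) else ([],[])) else (if b7 then ([],[]) else ([True, True, True, True, True, True], [False, True, False, True, True, False]))) else (if b6 then (if b7 then ([],[]) else ([True, True, True, True, False, True], [False, True, False, True, True, False])) else (if b7 then ([False, False, True, True, True, False], [True, True, True, True, True, True]) else ([],[])))) else (if b5 then (if b6 then (if b7 then ([],[]) else ([True, True, False, False, True, True], [False, True, False, False, True, True])) else (if b7 then ([True, True, False, False, True, True], [False, True, False, True, True, True]) else ([],[]))) else (if b6 then (if b7 then ([False, False, True, True, False, True], [True, True, True, True, True, True]) else ([],[])) else (if b7 then ([],[]) else ([True, True, True, False, True, True], [False, True, False, True, False, True]))))) else (if b4 then (if b5 then (if b6 then (if b7 then ([],[]) else ([True, True, False, False, True, True], [False, True, False, False, True, False])) else (if b7 then ([True, True, False, False, True, True], [False, True, False, True, True, False]) else ([],[]))) else (if b6 then (if b7 then ([False, False, True, True, False, True], [True, True, True, True, True, False]) else ([],[])) else (if b7 then ([],[]) else ([True, True, True, False, True, True], [False, True, False, True, False, False])))) else (if b5 then (if b6 then (if b7 then ([True, True, True, True, True, True], [False, True, False, False, True, True]) else ([],[])) else (if b7 then ([],[]) else ([True, True, True, True, True, True], [False, True, False, True, True, True]))) else (if b6 then (if b7 then ([],[]) else ([True, True, False, True, True, True], [False, True, False, False, False, True])) else (if b7 then ([True, True, False, True, True, True], [False,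 True, False, True, False, True]) else ([],[])))))) else (if b3 then (if b4 then (if b5 then (if b6 then (if b7 then ([],[]) else ([True, True, False, False, True, True], [False, True, True, False, True, False])) else (if b7 then ([True, True, False, False, True, True], [False, True, True, True, True, False]) else ([],[]))) else (if b6 then (if b7 then ([False, True, True, True, False, False], [True, False, True, True, False, True]) else ([],[])) else (if b7 then ([],[]) else ([True, True, True, False, True, True], [False, True, True, True, False, False])))) else (if b5 then (if b6 then (if b7 then ([False, True, True, True, False, True], [True, False, True, True, False, True]) else ([],[])) else (if b7 then ([],[]) else ([False, True, False, True, True, True], [True, False, True, True, True, True]))) else (if b6 then (if b7 then ([],[]) else ([False, True, True, True, True, True], [True, False, True, False, False, True])) else (if b7 then ([False, True, True, True, True, True], [True, False, True, True, False, True]) else ([],[]))))) else (if b4 then (if b5 then (if b6 then (if b7 then ([True, True, True, True, True, True], [False, True, True, False, True, False]) else ([],[])) else (if b7 then ([],[]) else ([False, True, False, True, True, True], [True, False, True, True, True, False]))) else (if b6 then (if b7 then ([],[]) else ([True, True, True, True, False, True], [False, True, True, True, True, False])) else (if b7 then ([False, True, True, True, True, True], [True, False, True, True, False, False]) else ([],[])))) else (if b5 then (if b6 then (if b7 then ([],[]) else ([True, True, True, False, False, True], [False, True, True, True, False, True])) else (if b7 then ([False, True, True, False, True, True], [True, False, True, True, True, True]) else ([],[]))) else (if b6 then (if b7 then ([True, True, True, False, True, True], [False, True, True, False, False, True]) else ([],[])) else (if b7 then ([],[]) else ([False, True, False, False, True, True], [True, False, True, True, False, True]))))))) else (if b2 then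 (if b3 then (if b4 then (if b5 then (if b6 then (if b7 then ([],[]) else ([False, True, True, True, True, True], [True, True, False, False, True, False])) else (if b7 then ([False, True, True, True, True, True], [True, True, False, True, True, False]) else ([],[]))) else (if b6 then (if b7 then ([False, True, True, True, False, True], [True, True, False, True, True, False]) else ([],[])) else (if b7 then ([],[]) else ([False, False, False, True, True, False], [True, False, True, True, True, True])))) else (if b5 then (if b6 then (if b7 then ([False, False, True, True, False, True], [True, False, True, True, False, True]) else ([],[])) else (if b7 then ([],[]) else ([False, True, False, False, True, True], [True, True, False, True, True, True]))) else (if b6 then (if b7 then ([],[]) else ([False, False, True, True, True, True], [True, False, True, False, False, True])) else (if b7 then ([False, True, True, False, True, True], [True, True, False, True, False, True]) else ([],[]))))) else (if b4 then (if b5 then (if b6 then (if b7 then ([True, False, True, True, True, True], [False, True, True, False, True, False]) else ([],[])) else (if b7 then ([],[]) else ([False, True, False, False, True, True], [True, True, False, True, True, False]))) else (if b6 then (if b7 then ([],[]) else ([True, False, True, True, False, True], [False, True, True, True, True, False])) else (if b7 then ([False, True, True, False, True, True], [True, True, False, True, False, False]) else ([],[])))) else (if b5 then (if b6 then (if b7 then ([],[]) else ([False, True, True, True, True, True], [True, True, False, False, True, True])) else (if b7 then ([False, True, True, True, True, True], [True, True, False, True, True, True]) else ([],[]))) else (if b6 then (if b7 then ([False, True, True, True, False, True], [True, True, False, True, True, True]) else ([],[])) else (if b7 then ([],[]) else ([False, True, False, True, True, True], [True, True, False, True, False, True])))))) else (if b3 then (if b4 then (if b5 then (if b6 then (if b7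 then ([False, True, True, True, False, False], [True, True, True, True, True, True]) else ([],[])) else (if b7 then ([],[]) else ([False, True, False, False, True, True], [True, True, True, True, True, False]))) else (if b6 then (if b7 then ([],[]) else ([True, True, True, True, False, False], [False, False, True, True, False, True])) else (if b7 then ([False, True, True, False, True, True], [True, True, True, True, False, False]) else ([],[])))) else (if b5 then (if b6 then (if b7 then ([],[]) else ([True, True, True, True, False, True], [False, False, True, True, False, True])) else (if b7 then ([True, True, False, True, True, True], [False, False, True, True, True, True]) else ([],[]))) else (if b6 then (if b7 then ([True, True, True, True, True, True], [False, False, True, False, False, True]) else ([],[])) else (if b7 then ([],[]) else ([True, True, True, True, True, True], [False, False, True, True, False, True]))))) else (if b4 then (if b5 then (if b6 then (if b7 then ([],[]) else ([True, True, False, True, True, True], [False, False, True, False, True, False])) else (if b7 then ([True, True, False, True, True, True], [False, False, True, True, True, False]) else ([],[]))) else (if b6 then (if b7 then ([False, True, True, True, False, True], [True, True, True, True, True, False]) else ([],[])) else (if b7 then ([],[]) else ([True, True, True, True, True, True], [False, False, True, True, False, False])))) else (if b5 then (if b6 then (if b7 then ([False, True, True, False, False, True], [True, True, True, True, False, True]) else ([],[])) else (if b7 then ([],[]) else ([True, True, True, False, True, True], [False, False, True, True, True, True]))) else (if b6 then (if b7 then ([],[]) else ([True, True, False, False, True, True], [False, False, True, False, False, True])) else (if b7 then ([True, True, False, False, True, True], [False, False, True, True, False, True]) else ([],[])))))))) else (if b1 then (if b2 then (if b3 then (if b4 then (if b5 then (if b6 then (if b7 then ([],[]) else ([True, True,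 True, True, True, True], [True, True, False, False, True, False])) else (if b7 then ([True, True, True, True, True, True], [True, True, False, True, True, False]) else ([],[]))) else (if b6 then (if b7 then ([True, True, True, True, False, True], [True, True, False, True, True, False]) else ([],[])) else (if b7 then ([],[]) else ([True, True, False, True, True, True], [True, True, False, True, False, False])))) else (if b5 then (if b6 then (if b7 then ([True, False, True, True, False, True], [True, False, True, True, False, True]) else ([],[])) else (if b7 then ([],[]) else ([True, True, False, False, True, True], [True, True, False, True, True, True]))) else (if b6 then (if b7 then ([],[]) else ([True, False, True, True, True, True], [True, False, True, False, False, True])) else (if b7 then ([True, True, True, False, True, True], [True, True, False, True, False, True]) else ([],[]))))) else (if b4 then (if b5 then (if b6 then (if b7 then ([True, True, False, False, True, True], [True, True, False, False, True, False]) else ([],[])) else (if b7 then ([],[]) else ([True, True, False, False, True, True], [True, True, False, True, True, False]))) else (if b6 then (if b7 then ([],[]) else ([True, True, False, False, False, True], [True, True, False, True, True, False])) else (if b7 then ([True, True, True, False, True, True], [True, True, False, True, False, False]) else ([],[])))) else (if b5 then (if b6 then (if b7 then ([],[]) else ([True, True, False, True, False, True], [True, True, False, True, False, True])) else (if b7 then ([True, True, True, True, True, True], [True, True, False, True, True, True]) else ([],[]))) else (if b6 then (if b7 then ([True, True, False, True, True, True], [True, True, False, False, False, True]) else ([],[])) else (if b7 then ([],[]) else ([True, True, False, True, True, True], [True, True, False, True, False, True])))))) else (if b3 then (if b4 then (if b5 then (if b6 then (if b7 then ([True, True, False, False, True, True], [True, True, True, False, True, False]) else ([],[])) else (if b7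 then ([],[]) else ([True, True, False, False, True, True], [True, True, True, True, True, False]))) else (if b6 then (if b7 then ([],[]) else ([True, True, False, False, False, True], [True, True, True, True, True, False])) else (if b7 then ([True, True, True, False, True, True], [True, True, True, True, False, False]) else ([],[])))) else (if b5 then (if b6 then (if b7 then ([],[]) else ([True, True, False, True, False, True], [True, True, True, True, False, True])) else (if b7 then ([True, True, True, True, True, True], [True, True, True, True, True, True]) else ([],[]))) else (if b6 then (if b7 then ([True, True, False, True, True, True], [True, True, True, False, False, True]) else ([],[])) else (if b7 then ([],[]) else ([True, True, False, True, True, True], [True, True, True, True, False, True]))))) else (if b4 then (if b5 then (if b6 then (if b7 then ([],[]) else ([True, True, True, True, True, True], [True, True, True, False, True, False])) else (if b7 then ([True, True, True, True, True, True], [True, True, True, True, True, False]) else ([],[]))) else (if b6 then (if b7 then ([True, True, True, True, False, True], [True, True, True, True, True, False]) else ([],[])) else (if b7 then ([],[]) else ([True, True, False, True, True, True], [True, True, True, True, False, False])))) else (if b5 then (if b6 then (if b7 then ([True, True, True, False, False, True], [True, True, True, True, False, True]) else ([],[])) else (if b7 then ([],[]) else ([True, True, False, False, True, True], [True, True, True, True, True, True]))) else (if b6 then (if b7 then ([],[]) else ([True, True, True, False, True, True], [True, True, True, False, False, True])) else (if b7 then ([True, True, True, False, True, True], [True, True, True, True, False, True]) else ([],[]))))))) else (if b2 then (if b3 then (if b4 then (if b5 then (if b6 then (if b7 then ([True, False, True, True, False, False], [True, True, True, True, True, True]) else ([],[])) else (if b7 then ([],[]) else ([True, True, False, True, True,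 True], [True, False, False, True, True, False]))) else (if b6 then (if b7 then ([],[]) else ([True, False, False, True, False, False], [True, True, True, True, False, True])) else (if b7 then ([True, True, True, True, True, True], [True, False, False, True, False, False]) else ([],[])))) else (if b5 then (if b6 then (if b7 then ([],[]) else ([True, False, False, True, False, True], [True, True, True, True, False, True])) else (if b7 then ([True, True, True, False, True, True], [True, False, False, True, True, True]) else ([],[]))) else (if b6 then (if b7 then ([True, False, False, True, True, True], [True, True, True, False, False, True]) else ([],[])) else (if b7 then ([],[]) else ([True, True, False, False, True, True], [True, False, False, True, False, True]))))) else (if b4 then (if b5 then (if b6 then (if b7 then ([],[]) else ([True, True, True, False, True, True], [True, False, False, False, True, False])) else (if b7 then ([True, True, True, False, True, True], [True, False, False, True, True, False]) else ([],[]))) else (if b6 then (if b7 then ([True, True, True, False, False, True], [True, False, False, True, True, False]) else ([],[])) else (if b7 then ([],[]) else ([True, True, False, False, True, True], [True, False, False, True, False, False])))) else (if b5 then (if b6 then (if b7 then ([True, True, True, True, False, True], [True, False, False, True, False, True]) else ([],[])) else (if b7 then ([],[]) else ([True, True, False, True, True, True], [True, False, False, True, True, True]))) else (if b6 then (if b7 then ([],[]) else ([True, True, True, True, True, True], [True, False, False, False, False, True])) else (if b7 then ([True, True, True, True, True, True], [True, False, False, True, False, True]) else ([],[])))))) else (if b3 then (if b4 then (if b5 then (if b6 then (if b7 then ([],[]) else ([True, True, True, False, True, True], [True, False, True, False, True, False])) else (if b7 then ([True, True, True, False, True, True], [True, False, True, True, True, False]) else ([],[]))) else (if b6 then (if b7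 then ([True, True, True, False, False, True], [True, False, True, True, True, False]) else ([],[])) else (if b7 then ([],[]) else ([True, True, False, False, True, True], [True, False, True, True, False, False])))) else (if b5 then (if b6 then (if b7 then ([True, True, True, True, False, True], [True, False, True, True, False, True]) else ([],[])) else (if b7 then ([],[]) else ([True, True, False, True, True, True], [True, False, True, True, True, True]))) else (if b6 then (if b7 then ([],[]) else ([True, True, True, True, True, True], [True, False, True, False, False, True])) else (if b7 then ([True, True, True, True, True, True], [True, False, True, True, False, True]) else ([],[]))))) else (if b4 then (if b5 then (if b6 then (if b7 then ([True, True, False, True, True, True], [True, False, True, False, True, False]) else ([],[])) else (if b7 then ([],[]) else ([True, True, False, True, True, True], [True, False, True, True, True, False]))) else (if b6 then (if b7 then ([],[]) else ([True, True, False, True, False, True], [True, False, True, True, True, False])) else (if b7 then ([True, True, True, True, True, True], [True, False, True, True, False, False]) else ([],[])))) else (if b5 then (if b6 then (if b7 then ([],[]) else ([True, True, False, False, False, True], [True, False, True, True, False, True])) else (if b7 then ([True, True, True, False, True, True], [True, False, True, True, True, True]) else ([],[]))) else (if b6 then (if b7 then ([True, True, False, False, True, True], [True, False, True, False, False, True]) else ([],[])) else (if b7 then ([],[]) else ([True, True, False, False, True, True], [True, False, True, True, False, True])))))))))"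

definition wit :: "bool list \<Rightarrow> bool list \<times> bool list" where
  "wit bs = wit8 (bs!0) (bs!1) (bs!2) (bs!3) (bs!4) (bs!5) (bs!6) (bs!7)"

definition Tl :: "bool list \<Rightarrow> (int\<times>int) list" where
  "Tl bs = map fst (filter snd (zip B8 bs))"

definition good :: "bool list \<Rightarrow> bool" where
  "good bs \<longleftrightarrow> (\<forall>x \<in> set A9. odd (dg (hf (fst (wit bs))) (vf (snd (wit bs))) (fst x) (snd x)) = (x \<in> set (Tl bs)))
     \<and> (\<forall>x \<in> set (Tl bs @ C4). x \<in> set (bfs (hf (fst (wit bs))) (vf (snd (wit bs))) 9 [(0,0)]))"



lemma all_good2: "\<forall>bs \<in> set (List.n_lists 8 [True, False]). odd (length (filter id bs)) \<or> good bs"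
  by code_simp

lemma three_cases: "0 \<le> (a::int) \<Longrightarrow> a < 3 \<Longrightarrow> a = 0 \<or> a = 1 \<or> a = 2" by arith

lemma inV33: "inV 3 3 x \<longleftrightarrow> x \<in> set A9"
proof (cases x)
  case (Pair a b)
  show ?thesis
  proof
    assume "inV 3 3 x"
    then have "a = 0 \<or> a = 1 \<or> a = 2" "b = 0 \<or> b = 1 \<or> b = 2"
      using three_cases unfolding Pair inV_def by auto
    then show "x \<in> set A9" unfolding Pair A9_def by auto
  qed (auto simp: Pair A9_def inV_def)
qed

lemma bd33: "bd 3 3 x \<longleftrightarrow> x \<in> set B8"
  unfolding bd_def inV33 by (auto simp: A9_def B8_def)

lemma cr33: "cr 3 3 x \<longleftrightarrow> x \<in> set C4"
  unfolding cr_def inV33 by (auto simp: A9_def C4_def)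

lemma Tl_gen: "set (map fst (filter snd (zip xs (map P xs)))) = {x\<in>set xs. P x}"
  by (induction xs) auto

lemma base33: "GRID 3 3"
  unfolding GRID_def
proof (intro allI impI)
  fix T S assume Tb: "T \<subseteq> Collect (bd 3 3)" and Te: "even (card T)"
    and Sc: "S \<subseteq> T \<union> Collect (cr 3 3)"
  define bs where "bs = map (\<lambda>x. x \<in> T) B8"
  have TB: "T \<subseteq> set B8" using Tb bd33 by blast
  have Teq: "set (Tl bs) = T" unfolding Tl_def bs_def Tl_gen using TB by auto
  have "card T = length (filter (\<lambda>x. x \<in> T) B8)"
  proof -
    have "T = set (filter (\<lambda>x. x \<in> T) B8)" using TB by auto
    moreover have "distinct (filter (\<lambda>x. x \<in> T) B8)" by (simp add: B8_def)
    ultimately show ?thesis by (metis distinct_card)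
  qed
  then have ev: "\<not> odd (length (filter id bs))" using Te unfolding bs_def by (simp add: filter_map comp_def)
  have "bs \<in> set (List.n_lists 8 [True, False])" unfolding set_n_lists bs_def by (auto simp: B8_def)
  then have gd: "good bs" using all_good2 ev by blast
  define H where "H = fst (wit bs)"
  define V where "V = snd (wit bs)"
  show "\<exists>hr vr. valid 3 3 hr vr \<and> (\<forall>x. inV 3 3 x \<longrightarrow> (odd (dg hr vr (fst x) (snd x)) \<longleftrightarrow> x \<in> T))
        \<and> (\<forall>x\<in>S. \<forall>y\<in>S. (x,y) \<in> (stp hr vr)\<^sup>*)"
  proof (intro exI conjI allI impI ballI)
    show "valid 3 3 (hf H) (vf V)" unfolding valid_def hf_def vf_def by auto
  next
    fix x assume "inV 3 3 x"
    then have "x \<in> set A9" using inV33 by blast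
    then show "odd (dg (hf H) (vf V) (fst x) (snd x)) \<longleftrightarrow> x \<in> T"
      using gd Teq unfolding good_def H_def V_def by blast
  next
    have r: "((0,0), x) \<in> (stp (hf H) (vf V))\<^sup>*" if "x \<in> S" for x
    proof -
      have "x \<in> T \<or> cr 3 3 x" using that Sc by blast
      then have "x \<in> set (Tl bs @ C4)" using Teq cr33 by auto
      then have "x \<in> set (bfs (hf H) (vf V) 9 [(0,0)])" using gd unfolding good_def H_def V_def by blast
      then show ?thesis by (rule bfs_sound[rotated]) simp
    qed
    fix x y assume "x \<in> S" "y \<in> S"
    then show "(x,y) \<in> (stp (hf H) (vf V))\<^sup>*" using r reach_sym by (meson rtrancl_trans)
  qed
qed

definition rect :: "int \<Rightarrow> int \<Rightarrow> int \<Rightarrow> int \<Rightarrow> (int\<times>int) set" where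
  "rect p0 q0 n m = {x. even (fst x - p0) \<and> even (snd x - q0) \<and> p0 \<le> fst x \<and> fst x < p0 + 2*n
      \<and> q0 \<le> snd x \<and> snd x < q0 + 2*m}"

lemma rect_fst: "m \<ge> 1 \<Longrightarrow> fst ` rect p0 q0 n m = {p. even (p - p0) \<and> p0 \<le> p \<and> p < p0 + 2*n}"
proof (rule set_eqI, rule iffI)
  fix p assume "p \<in> fst ` rect p0 q0 n m" then show "p \<in> {p. even (p - p0) \<and> p0 \<le> p \<and> p < p0 + 2*n}"
    unfolding rect_def by auto
next
  fix p assume "m \<ge> 1" "p \<in> {p. even (p - p0) \<and> p0 \<le> p \<and> p < p0 + 2*n}"
  then show "p \<in> fst ` rect p0 q0 n m" by (intro image_eqI[of _ _ "(p,q0)"]) (auto simp: rect_def)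
qed

lemma rect_snd: "n \<ge> 1 \<Longrightarrow> snd ` rect p0 q0 n m = {q. even (q - q0) \<and> q0 \<le> q \<and> q < q0 + 2*m}"
proof (rule set_eqI, rule iffI)
  fix q assume "q \<in> snd ` rect p0 q0 n m" then show "q \<in> {q. even (q - q0) \<and> q0 \<le> q \<and> q < q0 + 2*m}"
    unfolding rect_def by auto
next
  fix q assume "n \<ge> 1" "q \<in> {q. even (q - q0) \<and> q0 \<le> q \<and> q < q0 + 2*m}"
  then show "q \<in> snd ` rect p0 q0 n m" by (intro image_eqI[of _ _ "(p0,q)"]) (auto simp: rect_def)
qed

lemma fin_lin: "finite {p. even (p - p0) \<and> p0 \<le> p \<and> p < p0 + 2*(n::int)}"
  by (rule finite_subset[of _ "{p0..<p0+2*n}"]) auto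

lemma Max_lin: "(n::int) \<ge> 1 \<Longrightarrow> Max {p. even (p - p0) \<and> p0 \<le> p \<and> p < p0 + 2*n} = p0 + 2*(n-1)"
  by (rule Max_eqI[OF fin_lin]; simp; presburger)

lemma Min_lin: "(n::int) \<ge> 1 \<Longrightarrow> Min {p. even (p - p0) \<and> p0 \<le> p \<and> p < p0 + 2*n} = p0"
  by (rule Min_eqI[OF fin_lin]) auto

lemma add_right_rect: "n \<ge> 1 \<Longrightarrow> m \<ge> 1 \<Longrightarrow> add_right (rect p0 q0 n m) = rect p0 q0 (n+1) m"
  unfolding add_right_def rect_fst Max_lin
  by (auto simp: rect_def; presburger)

lemma add_left_rect: "n \<ge> 1 \<Longrightarrow> m \<ge> 1 \<Longrightarrow> add_left (rect p0 q0 n m) = rect (p0-2) q0 (n+1) m"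
  unfolding add_left_def rect_fst Min_lin
  by (auto simp: rect_def; presburger)

lemma add_top_rect: "n \<ge> 1 \<Longrightarrow> m \<ge> 1 \<Longrightarrow> add_top (rect p0 q0 n m) = rect p0 q0 n (m+1)"
  unfolding add_top_def rect_snd Max_lin
  by (auto simp: rect_def; presburger)

lemma add_bottom_rect: "n \<ge> 1 \<Longrightarrow> m \<ge> 1 \<Longrightarrow> add_bottom (rect p0 q0 n m) = rect p0 (q0-2) n (m+1)"
  unfolding add_bottom_def rect_snd Min_lin
  by (auto simp: rect_def; presburger)

lemma box_col: "\<exists>q0. odd q0 \<and> box (Suc m) (Suc 0) = rect (-1) q0 1 (int m + 1)"
proof (induction m)
  case 0
  have "box (Suc 0) (Suc 0) = rect (-1) (-1) 1 1"
    by (auto simp: rect_def prod_eq_iff; presburger)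
  then show ?case by (intro exI[of _ "-1"]) simp
next
  case (Suc m)
  then obtain q0 where q: "odd q0" "box (Suc m) (Suc 0) = rect (-1) q0 1 (int m + 1)" by blast
  show ?case
  proof (cases "odd (Suc m)")
    case True
    then have "box (Suc (Suc m)) (Suc 0) = rect (-1) (q0-2) 1 (int m + 1 + 1)"
      using q add_bottom_rect[of 1 "int m + 1" "-1" q0] by simp
    then show ?thesis using q by (intro exI[of _ "q0-2"]) simp
  next
    case False
    then have "box (Suc (Suc m)) (Suc 0) = rect (-1) q0 1 (int m + 1 + 1)"
      using q add_top_rect[of 1 "int m + 1" "-1" q0] by simp
    then show ?thesis using q by (intro exI[of _ q0]) simp
  qed
qed

lemma box_rect: "\<exists>p0 q0. odd p0 \<and> odd q0 \<and> box (Suc m) (Suc n) = rect p0 q0 (int n + 1) (int m + 1)"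
proof (induction n)
  case 0
  obtain q0 where "odd q0" "box (Suc m) (Suc 0) = rect (-1) q0 1 (int m + 1)" using box_col[of m] by blast
  then show ?case by (intro exI[of _ "-1"] exI[of _ q0]) simp
next
  case (Suc n)
  then obtain p0 q0 where q: "odd p0" "odd q0" "box (Suc m) (Suc n) = rect p0 q0 (int n + 1) (int m + 1)" by blast
  show ?case
  proof (cases "odd (Suc n)")
    case True
    then have "box (Suc m) (Suc (Suc n)) = rect p0 q0 (int n + 1 + 1) (int m + 1)"
      using q add_right_rect[of "int n + 1" "int m + 1" p0 q0] by simp
    then show ?thesis using q by (intro exI[of _ p0] exI[of _ q0]) simp
  next
    case False
    then have "box (Suc m) (Suc (Suc n)) = rect (p0-2) q0 (int n + 1 + 1) (int m + 1)"
      using q add_left_rect[of "int n + 1" "int m + 1" p0 q0] by simp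
    then show ?thesis using q by (intro exI[of _ "p0-2"] exI[of _ q0]) simp
  qed
qed

definition phi :: "int \<Rightarrow> int \<Rightarrow> int\<times>int \<Rightarrow> int\<times>int" where
  "phi a c g = (a + 2 * fst g, c + 2 * snd g)"

lemma inside_char:
  assumes "M \<ge> 1" "N \<ge> 1"
  shows "\<exists>a c. even a \<and> even c \<and> (\<forall>v. inside_box M N v \<longleftrightarrow> (\<exists>g. inV (int N) (int M) g \<and> v = phi a c g))"
proof -
  obtain m n where mn: "M = Suc m" "N = Suc n" using assms by (metis Suc_le_D One_nat_def)
  obtain p0 q0 where q': "odd p0" "odd q0" "box (Suc m) (Suc n) = rect p0 q0 (int n + 1) (int m + 1)"
    using box_rect[of m n] by blast
  then have q: "odd p0" "odd q0" "box M N = rect p0 q0 (int N) (int M)" using mn by (simp_all add: add.commute)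
  have "inside_box M N v \<longleftrightarrow> (\<exists>g. inV (int N) (int M) g \<and> v = phi (p0+1) (q0+1) g)" for v
  proof
    assume "inside_box M N v"
    then obtain p q where pq: "(p,q) \<in> rect p0 q0 (int N) (int M)" "p < fst v" "fst v < p + 2"
      "q < snd v" "snd v < q + 2" "even (fst v)" "even (snd v)"
      unfolding inside_box_def q L1_vertex_def by auto
    then have "fst v = p + 1" "snd v = q + 1" by (auto simp: rect_def; presburger)+
    then show "\<exists>g. inV (int N) (int M) g \<and> v = phi (p0+1) (q0+1) g"
      using pq(1) unfolding rect_def inV_def phi_def
      by (intro exI[of _ "((p - p0) div 2, (q - q0) div 2)"]) (auto simp: prod_eq_iff elim!: evenE)
  next
    assume "\<exists>g. inV (int N) (int M) g \<and> v = phi (p0+1) (q0+1) g"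
    then obtain g where g: "inV (int N) (int M) g" "v = phi (p0+1) (q0+1) g" by blast
    have "(p0 + 2 * fst g, q0 + 2 * snd g) \<in> box M N" using g unfolding q rect_def inV_def by auto
    moreover have "L1_vertex v" using g q unfolding L1_vertex_def phi_def by auto
    ultimately show "inside_box M N v" unfolding inside_box_def using g unfolding phi_def
      by (auto intro!: bexI[of _ "(p0 + 2 * fst g, q0 + 2 * snd g)"])
  qed
  then show ?thesis using q by (intro exI[of _ "p0+1"] exI[of _ "q0+1"]) auto
qed

lemma sq4:
  fixes x y :: int
  assumes "x^2 + y^2 = 4" "even x" "even y"
  shows "(x = 2 \<and> y = 0) \<or> (x = -2 \<and> y = 0) \<or> (x = 0 \<and> y = 2) \<or> (x = 0 \<and> y = -2)"
proof -
  obtain x' y' where xy: "x = 2*x'" "y = 2*y'" using assms(2,3) by (auto elim!: evenE)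
  then have e: "x'^2 + y'^2 = 1" using assms(1) by (simp add: power_mult_distrib)
  then have "x'^2 \<le> 1" "y'^2 \<le> 1" by (smt (verit) zero_le_power2)+
  then have "\<bar>x'\<bar> \<le> 1" "\<bar>y'\<bar> \<le> 1" using abs_square_le_1 by blast+
  then have "x' \<in> {-1,0,1}" "y' \<in> {-1,0,1}" by auto
  then show ?thesis using e xy by auto
qed

definition nb :: "int\<times>int \<Rightarrow> int\<times>int \<Rightarrow> bool" where
  "nb g h \<longleftrightarrow> h = (fst g + 1, snd g) \<or> h = (fst g - 1, snd g) \<or> h = (fst g, snd g + 1) \<or> h = (fst g, snd g - 1)"

lemma phi_inj: "phi a c g = phi a c h \<longleftrightarrow> g = h"
  unfolding phi_def by (auto simp: prod_eq_iff)

lemma L1_other: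
  assumes "L1_vertex u" "L1_vertex w" "(fst u - fst w)^2 + (snd u - snd w)^2 = 4"
  shows "w = (fst u + 2, snd u) \<or> w = (fst u - 2, snd u) \<or> w = (fst u, snd u + 2) \<or> w = (fst u, snd u - 2)"
proof -
  have "even (fst u - fst w)" "even (snd u - snd w)" using assms(1,2) unfolding L1_vertex_def by auto
  from sq4[OF assms(3) this] show ?thesis by (auto simp: prod_eq_iff)
qed

lemma L1_nb:
  assumes ac: "even a" "even c" and e: "L1_edge e" and g: "phi a c g \<in> e"
  shows "\<exists>h. nb g h \<and> e = {phi a c g, phi a c h}"
proof -
  obtain u w where uw: "e = {u,w}" "L1_vertex u" "L1_vertex w" "(fst u - fst w)^2 + (snd u - snd w)^2 = 4"
    using e unfolding L1_edge_def by blast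
  have sym4: "(fst w - fst u)^2 + (snd w - snd u)^2 = 4" using uw(4) by (simp add: power2_commute)
  obtain z where z: "e = {phi a c g, z}" "z = (fst (phi a c g) + 2, snd (phi a c g)) \<or> z = (fst (phi a c g) - 2, snd (phi a c g))
       \<or> z = (fst (phi a c g), snd (phi a c g) + 2) \<or> z = (fst (phi a c g), snd (phi a c g) - 2)"
  proof (cases "phi a c g = u")
    case True
    then show ?thesis using that[of w] uw L1_other[OF uw(2,3,4)] by auto
  next
    case False
    then have "phi a c g = w" using g uw by auto
    then show ?thesis using that[of u] uw L1_other[OF uw(3,2) sym4] by (auto simp: insert_commute)
  qed
  from z(2) consider "z = phi a c (fst g + 1, snd g)" | "z = phi a c (fst g - 1, snd g)"
    | "z = phi a c (fst g, snd g + 1)" | "z = phi a c (fst g, snd g - 1)"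
    unfolding phi_def by (auto simp: algebra_simps)
  then show ?thesis
  proof cases
    case 1 then show ?thesis using z(1) by (intro exI[of _ "(fst g + 1, snd g)"]) (simp add: nb_def)
  next
    case 2 then show ?thesis using z(1) by (intro exI[of _ "(fst g - 1, snd g)"]) (simp add: nb_def)
  next
    case 3 then show ?thesis using z(1) by (intro exI[of _ "(fst g, snd g + 1)"]) (simp add: nb_def)
  next
    case 4 then show ?thesis using z(1) by (intro exI[of _ "(fst g, snd g - 1)"]) (simp add: nb_def)
  qed
qed

lemma sum_parity:
  fixes f :: "'a \<Rightarrow> nat"
  assumes "finite A"
  shows "even (sum f A) \<longleftrightarrow> even (card {x\<in>A. odd (f x)})"
  using assms
proof (induction A rule: finite_induct)
  case empty then show ?case by simp
next
  case (insert x F)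
  have fin: "finite {y\<in>F. odd (f y)}" using insert by simp
  have "{y \<in> insert x F. odd (f y)} = (if odd (f x) then insert x {y\<in>F. odd (f y)} else {y\<in>F. odd (f y)})"
    by auto
  then show ?case using insert fin by (auto simp: card_insert_if)
qed

lemma card4:
  assumes "distinct [p1,p2,p3,p4]"
  shows "card {x. (x = p1 \<and> b1) \<or> (x = p2 \<and> b2) \<or> (x = p3 \<and> b3) \<or> (x = p4 \<and> b4)}
     = of_bool b1 + of_bool b2 + of_bool b3 + of_bool b4"
proof -
  have "{x. (x = p1 \<and> b1) \<or> (x = p2 \<and> b2) \<or> (x = p3 \<and> b3) \<or> (x = p4 \<and> b4)}
    = (if b1 then {p1} else {}) \<union> (if b2 then {p2} else {}) \<union> (if b3 then {p3} else {}) \<union> (if b4 then {p4} else {})"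
    by auto
  then show ?thesis using assms by (cases b1; cases b2; cases b3; cases b4) (auto simp: card_insert_if)
qed

theorem lemma4p2:
  fixes M N :: nat and P :: "(int \<times> int) set set"
  assumes "M \<ge> 3" and "N \<ge> 3"
    and "primal_contour_config P"
    and "even (card {e \<in> P. crossing_edge M N e})"
  shows "\<exists>P'. (\<forall>e\<in>P'. L1_edge e)
     \<and> (\<forall>e. \<not> box_edge M N e \<longrightarrow> (e \<in> P' \<longleftrightarrow> e \<in> P))
     \<and> (\<forall>e f. e \<in> P' \<and> crossing_edge M N e \<and> f \<in> P' \<and> crossing_edge M N f
              \<longrightarrow> same_contour P' e f)
     \<and> (\<forall>v. inside_box M N v \<longrightarrow> even (deg P' v))"
proof -
  define n where "n = int N"
  define m where "m = int M"
  have n3: "n \<ge> 3" and m3: "m \<ge> 3" using assms(1,2) unfolding n_def m_def by auto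
  obtain a c where ac: "even a" "even c"
    and ins: "\<And>v. inside_box M N v \<longleftrightarrow> (\<exists>g. inV n m g \<and> v = phi a c g)"
    using inside_char[of M N] assms(1,2) unfolding n_def m_def by auto
  have ins_phi: "inside_box M N (phi a c g) \<longleftrightarrow> inV n m g" for g
    using ins phi_inj by metis
  have PL1: "\<And>e. e \<in> P \<Longrightarrow> L1_edge e" using assms(3) unfolding primal_contour_config_def by blast
  define CE where "CE g = {e\<in>P. crossing_edge M N e \<and> phi a c g \<in> e}" for g
  define T where "T = {g. inV n m g \<and> odd (card (CE g))}"
  define S where "S = {g. inV n m g \<and> card (CE g) > 0}"
  have CE_sub: "CE g \<subseteq> (\<lambda>h. {phi a c g, phi a c h}) ` {h. nb g h \<and> \<not> inV n m h}" if g: "inV n m g" for g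
  proof
    fix e assume e: "e \<in> CE g"
    then obtain h where h: "nb g h" "e = {phi a c g, phi a c h}"
      using L1_nb[OF ac PL1] unfolding CE_def by blast
    have "\<exists>w\<in>e. \<not> inside_box M N w" using e unfolding CE_def crossing_edge_def by blast
    then have "\<not> inV n m h" using h(2) g ins_phi by auto
    then show "e \<in> (\<lambda>h. {phi a c g, phi a c h}) ` {h. nb g h \<and> \<not> inV n m h}" using h by blast
  qed
  have finnb: "finite {h. nb g h \<and> Q h}" for g Q
    by (rule finite_subset[of _ "{(fst g + 1, snd g), (fst g - 1, snd g), (fst g, snd g + 1), (fst g, snd g - 1)}"])
       (auto simp: nb_def)
  have finCE: "finite (CE g)" if "inV n m g" for g
    using CE_sub[OF that] finnb by (meson finite_imageI finite_subset)
  have cardCE: "card (CE g) \<le> card {h. nb g h \<and> \<not> inV n m h}" if "inV n m g" for g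
    using CE_sub[OF that] finnb by (meson card_image_le card_mono dual_order.trans finite_imageI)
  have nb_out: "bd n m g" if "inV n m g" "nb g h" "\<not> inV n m h" for g h
    using that unfolding nb_def inV_def bd_def by auto
  have pos_ex: "\<exists>h. nb g h \<and> \<not> inV n m h" if "inV n m g" "card (CE g) > 0" for g
  proof -
    have "card {h. nb g h \<and> \<not> inV n m h} > 0" using cardCE[OF that(1)] that(2) by linarith
    then show ?thesis by (metis (mono_tags, lifting) card.empty empty_Collect_eq less_irrefl)
  qed
  have Tb: "T \<subseteq> Collect (bd n m)"
  proof
    fix g assume "g \<in> T"
    then have "inV n m g" "card (CE g) > 0" unfolding T_def by (auto intro: odd_pos)
    then show "g \<in> Collect (bd n m)" using pos_ex nb_out by blast
  qed
  have noncorner: "card {h. nb g h \<and> \<not> inV n m h} \<le> 1" if g: "inV n m g" "\<not> cr n m g" for g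
  proof -
    obtain i j where gij: "g = (i,j)" by fastforce
    have "\<exists>h0. {h. nb g h \<and> \<not> inV n m h} \<subseteq> {h0}"
    proof (cases "i = 0")
      case True
      then show ?thesis using g n3 m3 unfolding gij cr_def inV_def nb_def
        by (intro exI[of _ "(i - 1, j)"]) auto
    next
      case i0: False
      show ?thesis
      proof (cases "i = n - 1")
        case True
        then show ?thesis using g n3 m3 i0 unfolding gij cr_def inV_def nb_def
          by (intro exI[of _ "(i + 1, j)"]) auto
      next
        case i1: False
        show ?thesis
        proof (cases "j = 0")
          case True
          then show ?thesis using g n3 m3 i0 i1 unfolding gij cr_def inV_def nb_def
            by (intro exI[of _ "(i, j - 1)"]) auto
        next
          case False
          then show ?thesis using g n3 m3 i0 i1 unfolding gij cr_def inV_def nb_def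
            by (intro exI[of _ "(i, j + 1)"]) auto
        qed
      qed
    qed
    then obtain h0 where "{h. nb g h \<and> \<not> inV n m h} \<subseteq> {h0}" by blast
    then have "card {h. nb g h \<and> \<not> inV n m h} \<le> card {h0}" by (intro card_mono) auto
    then show ?thesis by simp
  qed
  have Sc: "S \<subseteq> T \<union> Collect (cr n m)"
  proof
    fix g assume gS: "g \<in> S"
    show "g \<in> T \<union> Collect (cr n m)"
    proof (rule ccontr)
      assume nn: "g \<notin> T \<union> Collect (cr n m)"
      have gV: "inV n m g" "card (CE g) > 0" using gS unfolding S_def by auto
      then have "even (card (CE g))" using nn unfolding T_def by auto
      then have "card (CE g) \<ge> 2" using gV(2) by presburger
      moreover have "\<not> cr n m g" using nn by blast
      then have "card (CE g) \<le> 1" using cardCE[OF gV(1)] noncorner[OF gV(1)] by fastforce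
      ultimately show False by simp
    qed
  qed
  define G where "G = {g. inV n m g}"
  have finG: "finite G"
    by (rule finite_subset[of _ "{0..<n} \<times> {0..<m}"]) (auto simp: G_def inV_def mem_Times_iff)
  have Xeq: "{e \<in> P. crossing_edge M N e} = (\<Union>g\<in>G. CE g)"
  proof
    show "{e \<in> P. crossing_edge M N e} \<subseteq> (\<Union>g\<in>G. CE g)"
    proof
      fix e assume e: "e \<in> {e \<in> P. crossing_edge M N e}"
      then obtain u where "u \<in> e" "inside_box M N u" unfolding crossing_edge_def by blast
      then obtain g where "inV n m g" "u = phi a c g" using ins by blast
      then show "e \<in> (\<Union>g\<in>G. CE g)" using e \<open>u \<in> e\<close> unfolding G_def CE_def by blast
    qed
  next
    show "(\<Union>g\<in>G. CE g) \<subseteq> {e \<in> P. crossing_edge M N e}" unfolding CE_def by blast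
  qed
  have disj: "CE g \<inter> CE g' = {}" if "g \<in> G" "g' \<in> G" "g \<noteq> g'" for g g'
  proof (rule ccontr)
    assume "CE g \<inter> CE g' \<noteq> {}"
    then obtain e where e: "e \<in> CE g" "e \<in> CE g'" by blast
    have gV: "inV n m g" using that(1) unfolding G_def by simp
    have "e \<in> (\<lambda>h. {phi a c g, phi a c h}) ` {h. nb g h \<and> \<not> inV n m h}" using CE_sub[OF gV] e(1) by (rule subsetD)
    then obtain h where h0: "h \<in> {h. nb g h \<and> \<not> inV n m h}" and h2: "e = {phi a c g, phi a c h}" by (rule imageE)
    have h: "\<not> inV n m h" "e = {phi a c g, phi a c h}" using h0 h2 by auto
    have "phi a c g' \<in> e" using e(2) unfolding CE_def by blast
    then have "phi a c g' = phi a c g \<or> phi a c g' = phi a c h" using h(2) by blast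
    then have "g' = g \<or> g' = h" unfolding phi_inj .
    moreover have "inV n m g'" using that(2) unfolding G_def by simp
    ultimately show False using that(3) h(1) by blast
  qed
  have cardX: "card {e \<in> P. crossing_edge M N e} = (\<Sum>g\<in>G. card (CE g))"
    unfolding Xeq
  proof (rule card_UN_disjoint[OF finG])
    show "\<forall>i\<in>G. finite (CE i)" using finCE unfolding G_def by blast
    show "\<forall>i\<in>G. \<forall>j\<in>G. i \<noteq> j \<longrightarrow> CE i \<inter> CE j = {}" using disj by blast
  qed
  have Te: "even (card T)"
  proof -
    have "T = {g\<in>G. odd (card (CE g))}" unfolding T_def G_def by auto
    then show ?thesis using sum_parity[OF finG, of "\<lambda>g. card (CE g)"] assms(4) cardX by simp
  qed
  have GR: "GRID n m" using grid_all[OF base33 n3 m3] .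
  obtain hr vr where v0: "valid n m hr vr"
    and par0': "\<forall>x. inV n m x \<longrightarrow> (odd (dg hr vr (fst x) (snd x)) \<longleftrightarrow> x \<in> T)"
    and re0': "\<forall>x\<in>S. \<forall>y\<in>S. (x,y) \<in> (stp hr vr)\<^sup>*"
    using GR[unfolded GRID_def, rule_format, OF Tb Te Sc] by (elim exE conjE) (rule that)
  have par0: "\<And>x. inV n m x \<Longrightarrow> (odd (dg hr vr (fst x) (snd x)) \<longleftrightarrow> x \<in> T)"
    by (rule par0'[rule_format])
  have re0: "\<And>x y. x \<in> S \<Longrightarrow> y \<in> S \<Longrightarrow> (x,y) \<in> (stp hr vr)\<^sup>*"
    by (rule re0'[rule_format])
  define Hs where "Hs = {{phi a c (i,j), phi a c (i+1,j)} | i j. hr i j} \<union> {{phi a c (i,j), phi a c (i,j+1)} | i j. vr i j}"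
  define P' where "P' = {e\<in>P. \<not> box_edge M N e} \<union> Hs"
  have phi_L1: "L1_vertex (phi a c g)" for g using ac by (simp add: L1_vertex_def phi_def)
  have Hs_cases: "\<exists>x y. e = {phi a c x, phi a c y} \<and> inV n m x \<and> inV n m y
       \<and> (fst x - fst y)^2 + (snd x - snd y)^2 = 1" if "e \<in> Hs" for e
  proof -
    from that consider i j where "e = {phi a c (i,j), phi a c (i+1,j)}" "hr i j"
      | i j where "e = {phi a c (i,j), phi a c (i,j+1)}" "vr i j" unfolding Hs_def by blast
    then show ?thesis
    proof cases
      case 1
      have "0 \<le> i \<and> i+1 < n \<and> 0 \<le> j \<and> j < m" using v0 1(2) unfolding valid_def by blast
      then show ?thesis using 1 unfolding inV_def
        by (intro exI[of _ "(i,j)"] exI[of _ "(i+1,j)"]) auto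
    next
      case 2
      have "0 \<le> i \<and> i < n \<and> 0 \<le> j \<and> j+1 < m" using v0 2(2) unfolding valid_def by blast
      then show ?thesis using 2 unfolding inV_def
        by (intro exI[of _ "(i,j)"] exI[of _ "(i,j+1)"]) auto
    qed
  qed
  have Hs_L1: "L1_edge e" if eH: "e \<in> Hs" for e
  proof -
    obtain x y where xy: "e = {phi a c x, phi a c y}" "(fst x - fst y)^2 + (snd x - snd y)^2 = 1"
      using Hs_cases[OF eH] by blast
    have "(fst (phi a c x) - fst (phi a c y))^2 + (snd (phi a c x) - snd (phi a c y))^2
        = 4 * ((fst x - fst y)^2 + (snd x - snd y)^2)"
      unfolding phi_def by (simp add: power2_eq_square algebra_simps)
    then show ?thesis unfolding L1_edge_def using xy phi_L1 by (intro exI[of _ "phi a c x"] exI[of _ "phi a c y"]) simp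
  qed
  have Hs_box: "box_edge M N e" if eH: "e \<in> Hs" for e
  proof -
    obtain x y where xy: "e = {phi a c x, phi a c y}" "inV n m x" "inV n m y"
      using Hs_cases[OF eH] by blast
    then show ?thesis unfolding box_edge_def using Hs_L1[OF eH] ins_phi by auto
  qed
  have box_nc: "box_edge M N e \<Longrightarrow> \<not> crossing_edge M N e" for e
    unfolding box_edge_def crossing_edge_def by blast
  have stp_Hs: "{phi a c x, phi a c y} \<in> Hs" if "(x,y) \<in> stp hr vr" for x y
  proof -
    from that consider "y = (fst x + 1, snd x)" "hr (fst x) (snd x)" | "x = (fst y + 1, snd y)" "hr (fst y) (snd y)"
      | "y = (fst x, snd x + 1)" "vr (fst x) (snd x)" | "x = (fst y, snd y + 1)" "vr (fst y) (snd y)"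
      unfolding stp_def by (auto simp: prod_eq_iff)
    then show ?thesis
    proof cases
      case 1 then show ?thesis unfolding Hs_def by (intro UnI1 CollectI exI[of _ "fst x"] exI[of _ "snd x"]) simp
    next
      case 2 then show ?thesis unfolding Hs_def by (intro UnI1 CollectI exI[of _ "fst y"] exI[of _ "snd y"]) (simp add: insert_commute)
    next
      case 3 then show ?thesis unfolding Hs_def by (intro UnI2 CollectI exI[of _ "fst x"] exI[of _ "snd x"]) simp
    next
      case 4 then show ?thesis unfolding Hs_def by (intro UnI2 CollectI exI[of _ "fst y"] exI[of _ "snd y"]) (simp add: insert_commute)
    qed
  qed
  define ADJ where "ADJ = {(x, y). x \<in> P' \<and> y \<in> P' \<and> x \<inter> y \<noteq> {}}"
  have walk: "\<exists>e'\<in>P'. phi a c g' \<in> e' \<and> (e,e') \<in> ADJ\<^sup>*"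
    if "(g,g') \<in> (stp hr vr)\<^sup>*" "e \<in> P'" "phi a c g \<in> e" for g g' e
    using that(1)
  proof (induction rule: rtrancl_induct)
    case base then show ?case using that(2,3) by blast
  next
    case (step y z)
    then obtain e1 where e1: "e1 \<in> P'" "phi a c y \<in> e1" "(e,e1) \<in> ADJ\<^sup>*" by blast
    have h: "{phi a c y, phi a c z} \<in> P'" using stp_Hs[OF step(2)] unfolding P'_def by blast
    then have "(e1, {phi a c y, phi a c z}) \<in> ADJ" using e1 unfolding ADJ_def by auto
    then have "(e, {phi a c y, phi a c z}) \<in> ADJ\<^sup>*" by (rule rtrancl.rtrancl_into_rtrancl[OF e1(3)])
    then show ?case using h by blast
  qed
  have cross_S: "\<exists>g\<in>S. phi a c g \<in> e" if cth: "e \<in> P'" "crossing_edge M N e" for e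
  proof -
    have "e \<notin> Hs" using cth(2) Hs_box box_nc by blast
    then have eP: "e \<in> P" using cth(1) unfolding P'_def by blast
    obtain u where u: "u \<in> e" "inside_box M N u" using cth(2) unfolding crossing_edge_def by blast
    then obtain g where g0: "inV n m g" "u = phi a c g" using ins[of u] by blast
    then have g: "inV n m g" "phi a c g \<in> e" using u(1) by auto
    then have "e \<in> CE g" using eP cth(2) unfolding CE_def by blast
    then have "card (CE g) > 0" using finCE[OF g(1)] by (metis card_gt_0_iff empty_iff)
    then show ?thesis using g unfolding S_def by blast
  qed
  have conn: "same_contour P' e f"
    if cth: "e \<in> P'" "crossing_edge M N e" "f \<in> P'" "crossing_edge M N f" for e f
  proof -
    obtain g where g: "g \<in> S" "phi a c g \<in> e" using cross_S cth(1,2) by blast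
    obtain g' where g': "g' \<in> S" "phi a c g' \<in> f" using cross_S cth(3,4) by blast
    obtain e' where e': "e' \<in> P'" "phi a c g' \<in> e'" "(e,e') \<in> ADJ\<^sup>*"
      using walk[OF re0[OF g(1) g'(1)] cth(1) g(2)] by blast
    have "(e', f) \<in> ADJ" using e' g' cth(3) unfolding ADJ_def by auto
    then have "(e,f) \<in> ADJ\<^sup>*" by (rule rtrancl.rtrancl_into_rtrancl[OF e'(3)])
    then show ?thesis unfolding same_contour_def ADJ_def using cth(1,3) by blast
  qed
  have degv: "even (deg P' v)" if vin: "inside_box M N v" for v
  proof -
    obtain g where g: "inV n m g" "v = phi a c g" using ins[of v] vin by blast
    obtain i j where gij: "g = (i,j)" by fastforce
    define Q where "Q h \<longleftrightarrow> (h = (i+1,j) \<and> hr i j) \<or> (h = (i-1,j) \<and> hr (i-1) j)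
       \<or> (h = (i,j+1) \<and> vr i j) \<or> (h = (i,j-1) \<and> vr i (j-1))" for h
    have vphi: "v = phi a c (i,j)" using g(2) gij by simp
    have HsV: "{e\<in>Hs. v \<in> e} = (\<lambda>h. {v, phi a c h}) ` {h. Q h}"
    proof (rule set_eqI, rule iffI)
      fix e assume "e \<in> {e\<in>Hs. v\<in>e}"
      then have eH: "e \<in> Hs" and ve: "v \<in> e" by auto
      from eH consider i' j' where "e = {phi a c (i',j'), phi a c (i'+1,j')}" "hr i' j'"
        | i' j' where "e = {phi a c (i',j'), phi a c (i',j'+1)}" "vr i' j'" unfolding Hs_def by blast
      then show "e \<in> (\<lambda>h. {v, phi a c h}) ` {h. Q h}"
      proof cases
        case 1
        then have "phi a c (i,j) = phi a c (i',j') \<or> phi a c (i,j) = phi a c (i'+1,j')" using ve vphi by auto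
        then have "(i,j) = (i',j') \<or> (i,j) = (i'+1,j')" unfolding phi_inj .
        then show ?thesis
        proof
          assume "(i,j) = (i',j')"
          then show ?thesis using 1 vphi unfolding Q_def by (intro image_eqI[of _ _ "(i+1,j)"]) auto
        next
          assume "(i,j) = (i'+1,j')"
          then have "i' = i - 1" "j' = j" by auto
          then show ?thesis using 1 vphi unfolding Q_def by (intro image_eqI[of _ _ "(i-1,j)"]) (auto simp: insert_commute)
        qed
      next
        case 2
        then have "phi a c (i,j) = phi a c (i',j') \<or> phi a c (i,j) = phi a c (i',j'+1)" using ve vphi by auto
        then have "(i,j) = (i',j') \<or> (i,j) = (i',j'+1)" unfolding phi_inj .
        then show ?thesis
        proof
          assume "(i,j) = (i',j')"
          then show ?thesis using 2 vphi unfolding Q_def by (intro image_eqI[of _ _ "(i,j+1)"]) auto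
        next
          assume "(i,j) = (i',j'+1)"
          then have "i' = i" "j' = j - 1" by auto
          then show ?thesis using 2 vphi unfolding Q_def by (intro image_eqI[of _ _ "(i,j-1)"]) (auto simp: insert_commute)
        qed
      qed
    next
      fix e assume "e \<in> (\<lambda>h. {v, phi a c h}) ` {h. Q h}"
      then obtain h where h: "Q h" "e = {v, phi a c h}" by blast
      have "e \<in> Hs"
        using h(1) unfolding Q_def
      proof (elim disjE conjE)
        assume "h = (i+1,j)" "hr i j"
        then show "e \<in> Hs" using h(2) vphi unfolding Hs_def by (intro UnI1 CollectI exI[of _ i] exI[of _ j]) simp
      next
        assume "h = (i-1,j)" "hr (i-1) j"
        then show "e \<in> Hs" using h(2) vphi unfolding Hs_def by (intro UnI1 CollectI exI[of _ "i-1"] exI[of _ j]) (simp add: insert_commute)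
      next
        assume "h = (i,j+1)" "vr i j"
        then show "e \<in> Hs" using h(2) vphi unfolding Hs_def by (intro UnI2 CollectI exI[of _ i] exI[of _ j]) simp
      next
        assume "h = (i,j-1)" "vr i (j-1)"
        then show "e \<in> Hs" using h(2) vphi unfolding Hs_def by (intro UnI2 CollectI exI[of _ i] exI[of _ "j-1"]) (simp add: insert_commute)
      qed
      then show "e \<in> {e\<in>Hs. v\<in>e}" using h(2) by simp
    qed
    have Qne: "Q h \<Longrightarrow> phi a c h \<noteq> v" for h unfolding Q_def vphi phi_inj by auto
    have injh: "inj_on (\<lambda>h. {v, phi a c h}) {h. Q h}"
    proof (rule inj_onI)
      fix h h' assume "h \<in> {h. Q h}" "h' \<in> {h. Q h}" "{v, phi a c h} = {v, phi a c h'}"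
      then have "phi a c h = phi a c h'" using Qne by (auto simp: doubleton_eq_iff)
      then show "h = h'" unfolding phi_inj .
    qed
    have cardQ: "card {h. Q h} = dg hr vr i j"
    proof -
      have "card {h. Q h} = of_bool (hr i j) + of_bool (hr (i-1) j) + of_bool (vr i j) + of_bool (vr i (j-1))"
        unfolding Q_def by (rule card4) auto
      then show ?thesis unfolding dg_def .
    qed
    have finQ: "finite {h. Q h}"
      by (rule finite_subset[of _ "{(i+1,j),(i-1,j),(i,j+1),(i,j-1)}"]) (auto simp: Q_def)
    have CEv: "{e\<in>P. \<not> box_edge M N e \<and> v \<in> e} = CE g"
    proof (rule set_eqI, rule iffI)
      fix e assume e: "e \<in> {e\<in>P. \<not> box_edge M N e \<and> v \<in> e}"
      then have "L1_edge e" using PL1 by blast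
      then have "\<exists>w\<in>e. \<not> inside_box M N w" using e unfolding box_edge_def by blast
      moreover have "inside_box M N v" by (rule vin)
      ultimately have "crossing_edge M N e" using e \<open>L1_edge e\<close> unfolding crossing_edge_def by blast
      then show "e \<in> CE g" using e g(2) unfolding CE_def by blast
    next
      fix e assume "e \<in> CE g"
      then show "e \<in> {e\<in>P. \<not> box_edge M N e \<and> v \<in> e}" using box_nc g(2) unfolding CE_def by blast
    qed
    have split: "{e\<in>P'. v \<in> e} = CE g \<union> {e\<in>Hs. v \<in> e}"
      unfolding P'_def CEv[symmetric] by blast
    have disj2: "CE g \<inter> {e\<in>Hs. v \<in> e} = {}" using Hs_box box_nc unfolding CE_def by blast
    have "deg P' v = card (CE g) + card {e\<in>Hs. v \<in> e}"
      unfolding deg_def split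
      by (rule card_Un_disjoint[OF finCE[OF g(1)] _ disj2]) (simp add: HsV finQ)
    also have "card {e\<in>Hs. v \<in> e} = dg hr vr i j"
      unfolding HsV card_image[OF injh] cardQ ..
    finally have dv: "deg P' v = card (CE g) + dg hr vr i j" .
    have "odd (dg hr vr i j) \<longleftrightarrow> odd (card (CE g))"
      using par0[OF g(1)] g(1) unfolding gij T_def by simp
    then show ?thesis unfolding dv by simp
  qed
  show ?thesis
  proof (intro exI[of _ P'] conjI allI impI ballI)
    fix e assume "e \<in> P'" then show "L1_edge e" unfolding P'_def using PL1 Hs_L1 by blast
  next
    fix e assume "\<not> box_edge M N e" then show "e \<in> P' \<longleftrightarrow> e \<in> P" unfolding P'_def using Hs_box by blast
  next
    fix e f assume "e \<in> P' \<and> crossing_edge M N e \<and> f \<in> P' \<and> crossing_edge M N f"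
    then show "same_contour P' e f" using conn by blast
  next
    fix v assume "inside_box M N v" then show "even (deg P' v)" by (rule degv)
  qed
qed

end
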